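(* Let $M$ be a matroid and let $B_1,\dots,B_s$ be a partial shelling of $\mathcal{I}(M)$ such that the set $\{B_1,\dots,B_s\}$ is an order ideal of $\mathrm{Int}_<(M)$ for some total order $<$ on the ground set of $M$. Then the partial shelling is extendable, i.e. there is an ordering $B'_1,\dots,B'_t$ of the remaining bases of $M$ such that $B_1,\dots,B_s,B'_1,\dots,B'_t$ is a shelling order of $\mathcal{I}(M)$.
   Context: For a matroid $M$ on finite set $E$, $\mathcal{I}(M)$ is its independence complex, whose facets are the bases. A shelling order of a pure simplicial complex is a total order $F_1<\dots<F_k$ of its facets such that for each $j\ge2$, $\langle F_1,\dots,F_{j-1}\rangle\cap\langle F_j\rangle$ is pure of dimension one less than the complex ($\langle\mathcal{G}\rangle$ the complex generated by $\mathcal{G}$). A partial shelling is a sequence of bases $B_1,\dots,B_s$ that is a shelling order of the complex $\langle B_1,\dots,B_s\rangle$. For a total order $<$ on $E$ and a basis $B$, the internally passive set $IP_<(B)$ is the set of $b\in B$ for which there is $b'\notin B$ with $b'<b$ and $(B\setminus\{b\})\cup\{b'\}$ a basis. $\mathrm{Int}_<(M)$ is the poset on the bases of $M$ with $B\preceq B'$ iff $IP_<(B)\subseteq IP_<(B')$. An order ideal of a poset is a downward-closed subset. *)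

theory Defs
  imports Main
begin

definition matroid :: "'a set \<Rightarrow> ('a set \<Rightarrow> bool) \<Rightarrow> bool" where
  "matroid E indep \<longleftrightarrow>
     finite E \<and>
     (\<forall>X. indep X \<longrightarrow> X \<subseteq> E) \<and>
     indep {} \<and>
     (\<forall>X Y. indep Y \<longrightarrow> X \<subseteq> Y \<longrightarrow> indep X) \<and>
     (\<forall>X Y. indep X \<longrightarrow> indep Y \<longrightarrow> card X < card Y \<longrightarrow>
        (\<exists>y \<in> Y - X. indep (insert y X)))"

definition basis :: "('a set \<Rightarrow> bool) \<Rightarrow> 'a set \<Rightarrow> bool" where
  "basis indep B \<longleftrightarrow> indep B \<and> (\<forall>X. indep X \<longrightarrow> B \<subseteq> X \<longrightarrow> X = B)"

definition gen_complex :: "'a set set \<Rightarrow> 'a set set" where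
  "gen_complex G = {S. \<exists>F \<in> G. S \<subseteq> F}"

text \<open>A complex is pure with all facets (maximal faces) of cardinality d,
  i.e. pure of dimension d - 1.\<close>
definition pure_card :: "'a set set \<Rightarrow> nat \<Rightarrow> bool" where
  "pure_card K d \<longleftrightarrow> (\<forall>S \<in> K. (\<forall>T \<in> K. S \<subseteq> T \<longrightarrow> T = S) \<longrightarrow> card S = d)"

text \<open>A partial shelling of the independence complex: a list of distinct bases
  (all of cardinality r = rank, so the generated complex is pure of dimension r-1)
  such that for each j \<ge> 2 the intersection of the complex generated by the
  earlier facets with the complex generated by the j-th facet is pure of
  dimension r - 2, i.e. all its facets have cardinality r - 1.\<close>
definition partial_shelling :: "('a set \<Rightarrow> bool) \<Rightarrow> 'a set list \<Rightarrow> bool" where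
  "partial_shelling indep Bs \<longleftrightarrow>
     distinct Bs \<and> (\<forall>B \<in> set Bs. basis indep B) \<and>
     (\<forall>j. 0 < j \<and> j < length Bs \<longrightarrow>
        pure_card (gen_complex (set (take j Bs)) \<inter> gen_complex {Bs ! j})
                  (card (Bs ! j) - 1))"

definition shelling_order :: "('a set \<Rightarrow> bool) \<Rightarrow> 'a set list \<Rightarrow> bool" where
  "shelling_order indep Bs \<longleftrightarrow>
     partial_shelling indep Bs \<and> set Bs = {B. basis indep B}"

text \<open>Internally passive elements of a basis B w.r.t. a total order R on E
  (R a reflexive linear order; b' < b means (b', b) \<in> R and b' \<noteq> b).\<close>
definition int_passive ::
  "'a set \<Rightarrow> ('a set \<Rightarrow> bool) \<Rightarrow> 'a rel \<Rightarrow> 'a set \<Rightarrow> 'a set" where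
  "int_passive E indep R B =
     {b \<in> B. \<exists>b' \<in> E - B. (b', b) \<in> R \<and> b' \<noteq> b \<and>
                basis indep (insert b' (B - {b}))}"

text \<open>Order ideal of Int_<(M): a set of bases closed downward under
  B' \<preceq> B iff IP(B') \<subseteq> IP(B).\<close>
definition int_order_ideal ::
  "'a set \<Rightarrow> ('a set \<Rightarrow> bool) \<Rightarrow> 'a rel \<Rightarrow> 'a set set \<Rightarrow> bool" where
  "int_order_ideal E indep R S \<longleftrightarrow>
     (\<forall>B \<in> S. basis indep B) \<and>
     (\<forall>B \<in> S. \<forall>B'. basis indep B' \<longrightarrow>
        int_passive E indep R B' \<subseteq> int_passive E indep R B \<longrightarrow> B' \<in> S)"

end

theory Submission
  imports Defs
begin


locale shctx =
  fixes E :: "'a set" and indep :: "'a set \<Rightarrow> bool" and R :: "'a rel"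
  assumes mat: "matroid E indep" and lin: "linear_order_on E R"
begin

lemma finE: "finite E" using mat unfolding matroid_def by blast
lemma indep_sub: "indep X \<Longrightarrow> X \<subseteq> E" using mat unfolding matroid_def by blast
lemma indep_fin: "indep X \<Longrightarrow> finite X" using indep_sub finE finite_subset by blast
lemma indep_mono: "indep Y \<Longrightarrow> X \<subseteq> Y \<Longrightarrow> indep X" using mat unfolding matroid_def by blast
lemma aug: "indep X \<Longrightarrow> indep Y \<Longrightarrow> card X < card Y \<Longrightarrow> \<exists>y\<in>Y-X. indep (insert y X)"
  using mat unfolding matroid_def by blast
lemma basis_indep: "basis indep B \<Longrightarrow> indep B" unfolding basis_def by blast

lemma basis_card: assumes "basis indep B" "basis indep C" shows "card B = card C"
proof (rule ccontr)
  have h: "card X < card Y \<Longrightarrow> basis indep X \<Longrightarrow> basis indep Y \<Longrightarrow> False" for X Y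
  proof -
    assume a: "card X < card Y" "basis indep X" "basis indep Y"
    then obtain y where "y \<in> Y - X" "indep (insert y X)" using aug basis_indep by blast
    then show False using a(2) unfolding basis_def by blast
  qed
  assume "card B \<noteq> card C"
  then show False using h assms by (metis nat_neq_iff)
qed

lemma indep_card_le: assumes "indep X" "basis indep B" shows "card X \<le> card B"
proof (rule ccontr)
  assume "\<not> card X \<le> card B"
  then obtain y where "y \<in> X - B" "indep (insert y B)" using aug basis_indep assms by (meson not_le)
  then show False using assms(2) unfolding basis_def by blast
qed

lemma card_basis: assumes "indep X" "basis indep B" "card X = card B" shows "basis indep X"
  unfolding basis_def
proof (intro conjI allI impI)
  fix Y assume "indep Y" "X \<subseteq> Y"
  then have "card Y \<le> card X" using indep_card_le assms by simp
  moreover have "card X \<le> card Y" using \<open>X \<subseteq> Y\<close> indep_fin[OF \<open>indep Y\<close>] card_mono by blast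
  ultimately show "Y = X" using card_subset_eq[OF indep_fin[OF \<open>indep Y\<close>] \<open>X \<subseteq> Y\<close>] by simp
qed (use assms in auto)

lemma exch_basis: assumes "basis indep B" "b \<in> B" "x \<notin> B" "indep (insert x (B - {b}))"
  shows "basis indep (insert x (B - {b}))"
proof -
  have fB: "finite B" using indep_fin basis_indep assms(1) by blast
  have "card (insert x (B - {b})) = card B"
    using assms fB by (simp add: card_Diff_singleton) (metis Suc_pred card_gt_0_iff empty_iff)
  then show ?thesis using card_basis assms by blast
qed

lemma maxext: assumes "indep X" "X \<subseteq> Y" "Y \<subseteq> E"
  shows "\<exists>G. X \<subseteq> G \<and> G \<subseteq> Y \<and> indep G \<and> (\<forall>y\<in>Y-G. \<not> indep (insert y G))"
proof -
  define Fam where "Fam = {G. X \<subseteq> G \<and> G \<subseteq> Y \<and> indep G}"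
  have fY: "finite Y" using assms finE finite_subset by blast
  have fin: "finite Fam" unfolding Fam_def by (rule finite_subset[of _ "Pow Y"]) (use fY in auto)
  have ne: "X \<in> Fam" using assms unfolding Fam_def by auto
  obtain G where G: "G \<in> Fam" "card G = Max (card ` Fam)"
    using fin ne by (metis (mono_tags, lifting) Max_in empty_iff finite_imageI image_iff)
  have "\<forall>y\<in>Y-G. \<not> indep (insert y G)"
  proof (intro ballI notI)
    fix y assume y: "y \<in> Y - G" "indep (insert y G)"
    then have "insert y G \<in> Fam" using G unfolding Fam_def by auto
    then have "card (insert y G) \<le> card G" using G fin by simp
    moreover have "finite G" using G fY unfolding Fam_def using finite_subset by blast
    ultimately show False using y by simp
  qed
  then show ?thesis using G unfolding Fam_def by blast
qed

lemma span: assumes "indep J" "J \<subseteq> X" "\<forall>x\<in>X-J. \<not> indep (insert x J)" "I \<subseteq> X" "indep I"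
  shows "card I \<le> card J"
proof (rule ccontr)
  assume "\<not> card I \<le> card J"
  then obtain y where "y \<in> I - J" "indep (insert y J)" using aug assms by (meson not_le)
  then show False using assms by blast
qed

lemma max_basis: assumes "indep D" "D \<subseteq> Y" "\<forall>y\<in>Y-D. \<not> indep (insert y D)" "basis indep B" "B \<subseteq> Y"
  shows "basis indep D"
proof -
  have "\<not> card D < card B"
  proof
    assume "card D < card B"
    then obtain y where "y \<in> B - D" "indep (insert y D)" using aug assms basis_indep by blast
    then show False using assms by blast
  qed
  moreover have "card D \<le> card B" using indep_card_le assms by blast
  ultimately show ?thesis using card_basis assms by simp
qed

lemma lt_total: "x \<in> E \<Longrightarrow> y \<in> E \<Longrightarrow> x \<noteq> y \<Longrightarrow> \<not> ((x,y) \<in> R \<and> x \<noteq> y) \<Longrightarrow> (y,x) \<in> R \<and> y \<noteq> x"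
  using lin unfolding linear_order_on_def total_on_def by auto
lemma lt_asym: "(x,y) \<in> R \<and> x \<noteq> y \<Longrightarrow> \<not> ((y,x) \<in> R \<and> y \<noteq> x)"
  using lin unfolding linear_order_on_def partial_order_on_def antisym_def by auto
lemma lt_trans: "(x,y) \<in> R \<and> x \<noteq> y \<Longrightarrow> (y,z) \<in> R \<and> y \<noteq> z \<Longrightarrow> (x,z) \<in> R \<and> x \<noteq> z"
  using lin unfolding linear_order_on_def partial_order_on_def preorder_on_def antisym_def trans_def
  by blast

lemma min_ex: "finite X \<Longrightarrow> X \<noteq> {} \<Longrightarrow> X \<subseteq> E \<Longrightarrow> \<exists>m\<in>X. \<forall>x\<in>X. \<not> ((x,m) \<in> R \<and> x \<noteq> m)"
proof (induction X rule: finite_ne_induct)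
  case (singleton x) then show ?case by auto
next
  case (insert x F)
  then obtain m where m: "m \<in> F" "\<forall>y\<in>F. \<not> ((y,m) \<in> R \<and> y \<noteq> m)" by auto
  show ?case
  proof (cases "(x,m) \<in> R \<and> x \<noteq> m")
    case True
    have "\<forall>y\<in>insert x F. \<not> ((y,x) \<in> R \<and> y \<noteq> x)"
      using True m lt_trans lt_asym by blast
    then show ?thesis by blast
  next
    case False
    then show ?thesis using m by blast
  qed
qed

end


context shctx
begin

abbreviation lt where "lt x y \<equiv> (x,y) \<in> R \<and> x \<noteq> y"
abbreviation IP where "IP \<equiv> int_passive E indep R"

lemma IP_sub: "IP B \<subseteq> B" unfolding int_passive_def by auto

lemma ip_exch: assumes B: "basis indep B" and b: "b \<in> IP B"
  shows "\<exists>B'. basis indep B' \<and> B - {b} \<subseteq> B' \<and> IP B' \<subseteq> B \<and> b \<notin> B'"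
proof -
  define Z where "Z = {x \<in> E - B. lt x b \<and> basis indep (insert x (B - {b}))}"
  have "Z \<noteq> {}" using b unfolding Z_def int_passive_def by auto
  moreover have "finite Z" "Z \<subseteq> E" unfolding Z_def using finE by auto
  ultimately obtain e where e: "e \<in> Z" "\<forall>x\<in>Z. \<not> lt x e" using min_ex by blast
  define B' where "B' = insert e (B - {b})"
  have eB: "e \<notin> B" "lt e b" "e \<in> E" using e(1) unfolding Z_def by auto
  have bB: "b \<in> B" using b IP_sub by blast
  have "basis indep B'" using e(1) unfolding Z_def B'_def by auto
  moreover have "b \<notin> B'" using eB unfolding B'_def by auto
  moreover have "IP B' \<subseteq> B"
  proof
    fix y assume y: "y \<in> IP B'"
    show "y \<in> B"
    proof (rule ccontr)
      assume "y \<notin> B"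
      then have ye: "y = e" using y IP_sub[of B'] unfolding B'_def by auto
      then obtain x where x: "x \<in> E - B'" "lt x e" "basis indep (insert x (B' - {e}))"
        using y unfolding int_passive_def by auto
      have "B' - {e} = B - {b}" using eB unfolding B'_def by auto
      moreover have "x \<noteq> b" using x(2) eB(2) lt_asym by blast
      ultimately have "x \<in> Z" using x lt_trans[OF x(2) eB(2)] unfolding Z_def B'_def by auto
      then show False using e x by blast
    qed
  qed
  ultimately show ?thesis unfolding B'_def by blast
qed

lemma ip_inj_aux: assumes B: "basis indep B" and C: "basis indep C" and eq: "IP B = IP C"
  and a: "a \<in> B - C" and amin: "\<forall>x\<in>(B-C)\<union>(C-B). \<not> lt x a"
  shows False
proof -
  have iB: "indep B" and iC: "indep C" using B C basis_indep by auto
  have CE: "C \<subseteq> E" "B \<subseteq> E" using iB iC indep_sub by auto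
  have i1: "indep (insert a (B \<inter> C))" using iB a by (auto intro: indep_mono)
  have h1: "insert a (B \<inter> C) \<subseteq> insert a C" and h2: "insert a C \<subseteq> E" using a CE by auto
  obtain G where G: "insert a (B \<inter> C) \<subseteq> G" "G \<subseteq> insert a C" "indep G"
     "\<forall>y\<in>insert a C - G. \<not> indep (insert y G)"
    using maxext[OF i1 h1 h2] by blast
  have bG: "basis indep G" using max_basis[OF G(3) G(2) G(4) C] by auto
  have fC: "finite C" using iC indep_fin by blast
  have cG: "card G = card C" using basis_card bG C by blast
  have "\<not> C \<subseteq> G"
  proof
    assume "C \<subseteq> G"
    then have "insert a C \<subseteq> G" using G a by auto
    then have "card (insert a C) \<le> card G" using indep_fin[OF G(3)] card_mono by blast
    then show False using cG a fC by simp
  qed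
  then obtain z where z: "z \<in> C" "z \<notin> G" by blast
  have Gs: "G \<subseteq> insert a (C - {z})" using G(2) z by auto
  have fin2: "finite (insert a (C - {z}))" using fC by simp
  have "card (insert a (C - {z})) = card C" using a z fC
    by (simp add: card_Diff_singleton) (metis Suc_pred card_gt_0_iff empty_iff)
  then have "G = insert a (C - {z})" using card_subset_eq[OF fin2 Gs] cG by simp
  then have ex: "basis indep (insert a (C - {z}))" using bG by simp
  have zB: "z \<notin> B" using z G(1) by auto
  have "z \<noteq> a" using a z by auto
  then have "lt a z" using amin z zB CE a lt_total by blast
  then have "z \<in> IP C" unfolding int_passive_def using z ex a CE by auto
  then show False using eq zB IP_sub by blast
qed

lemma ip_inj: assumes B: "basis indep B" and C: "basis indep C" and eq: "IP B = IP C"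
  shows "B = C"
proof (rule ccontr)
  assume "B \<noteq> C"
  define D where "D = (B-C)\<union>(C-B)"
  have "D \<noteq> {}" using \<open>B \<noteq> C\<close> unfolding D_def by auto
  moreover have "D \<subseteq> E" using B C basis_indep indep_sub unfolding D_def by blast
  moreover then have "finite D" using finE finite_subset by blast
  ultimately obtain a where a: "a \<in> D" "\<forall>x\<in>D. \<not> lt x a" using min_ex by blast
  show False
  proof (cases "a \<in> B - C")
    case True
    then show ?thesis using ip_inj_aux[OF B C eq True] a unfolding D_def by blast
  next
    case False
    then have "a \<in> C - B" using a unfolding D_def by blast
    then show ?thesis using ip_inj_aux[OF C B eq[symmetric]] a unfolding D_def by blast
  qed
qed

end


context shctx
begin

lemma ip_mono1: assumes B: "basis indep B" and C: "basis indep C" and PC: "IP B \<subseteq> C"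
  and b: "b \<in> IP B" shows "b \<in> IP C"
proof (rule ccontr)
  assume nb: "b \<notin> IP C"
  define P where "P = IP B"
  define Lb where "Lb = {x \<in> E. lt x b}"
  have iB: "indep B" and iC: "indep C" using B C basis_indep by auto
  have BE: "B \<subseteq> E" and CE: "C \<subseteq> E" using iB iC indep_sub by auto
  have fB: "finite B" and fC: "finite C" using iB iC indep_fin by auto
  have bB: "b \<in> B" using b IP_sub by blast
  have bC: "b \<in> C" using b PC by blast
  have PB: "P \<subseteq> B" using IP_sub unfolding P_def by blast
  have actC: "\<not> indep (insert x (C - {b}))" if "x \<in> E - C" "lt x b" for x
  proof
    assume h: "indep (insert x (C - {b}))"
    have "x \<notin> C" using that by blast
    then have "basis indep (insert x (C - {b}))" using exch_basis[OF C bC _ h] by blast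
    then have "b \<in> IP C" unfolding int_passive_def using that bC by blast
    then show False using nb by blast
  qed
  obtain e where e: "e \<in> E - B" "lt e b" "basis indep (insert e (B - {b}))"
    using b unfolding int_passive_def by blast
  have bLb: "b \<notin> Lb" unfolding Lb_def by auto
  have i0: "indep (P - {b})" using iB PB by (auto intro: indep_mono)
  have s1: "P - {b} \<subseteq> Lb \<union> (P - {b})" by blast
  have s2: "Lb \<union> (P - {b}) \<subseteq> E" using PB BE unfolding Lb_def by blast
  obtain G where G: "P - {b} \<subseteq> G" "G \<subseteq> Lb \<union> (P - {b})" "indep G"
      "\<forall>y\<in>(Lb \<union> (P - {b})) - G. \<not> indep (insert y G)"
    using maxext[OF i0 s1 s2] by blast
  have bG: "b \<notin> G" using G(2) bLb by blast
  define J where "J = C - {b}"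
  have iJ: "indep J" using iC unfolding J_def by (auto intro: indep_mono)
  have fJ: "finite J" using fC unfolding J_def by simp
  have spanJ: "\<forall>x\<in>(G \<union> J) - J. \<not> indep (insert x J)"
  proof
    fix x assume x: "x \<in> (G \<union> J) - J"
    then have "x \<notin> C" using bG unfolding J_def by auto
    moreover have "x \<in> Lb" using x G(1,2) PC unfolding J_def P_def by auto
    ultimately show "\<not> indep (insert x J)" using actC unfolding Lb_def J_def by auto
  qed
  have s3: "G \<subseteq> G \<union> J" by blast
  have s4: "G \<union> J \<subseteq> E" using G(2) s2 CE unfolding J_def by blast
  obtain G' where G': "G \<subseteq> G'" "G' \<subseteq> G \<union> J" "indep G'" "\<forall>y\<in>(G \<union> J) - G'. \<not> indep (insert y G')"
    using maxext[OF G(3) s3 s4] by blast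
  have "J \<subseteq> G \<union> J" by blast
  then have cG': "card G' \<le> card J" using span[OF iJ _ spanJ G'(2) G'(3)] by blast
  have iJb: "indep (insert b J)" using iC bC unfolding J_def by (simp add: insert_absorb)
  have "b \<notin> J" unfolding J_def by simp
  then have "card (insert b J) = Suc (card J)" using fJ by simp
  then obtain y where y: "y \<in> insert b J - G'" "indep (insert y G')"
    using aug[OF G'(3) iJb] cG' by auto
  have "y = b" using y G'(4) by blast
  then have iGb: "indep (insert b G)" using y(2) G'(1) by (auto intro: indep_mono)
  have s5: "insert b G \<subseteq> Lb \<union> B" using G(2) PB bB by blast
  have s6: "Lb \<union> B \<subseteq> E" using BE unfolding Lb_def by blast
  obtain D where D: "insert b G \<subseteq> D" "D \<subseteq> Lb \<union> B" "indep D" "\<forall>y\<in>(Lb \<union> B) - D. \<not> indep (insert y D)"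
    using maxext[OF iGb s5 s6] by blast
  have bD: "basis indep D" using max_basis[OF D(3) D(2) D(4) B] by blast
  have cD: "card D = card B" using basis_card bD B by blast
  have fD: "finite D" using indep_fin D(3) by blast
  define J2 where "J2 = D - {b}"
  have iJ2: "indep J2" using D(3) unfolding J2_def by (auto intro: indep_mono)
  have J2X: "J2 \<subseteq> Lb \<union> (B - {b})" using D(2) unfolding J2_def by blast
  have spanJ2: "\<forall>x\<in>(Lb \<union> (B - {b})) - J2. \<not> indep (insert x J2)"
  proof
    fix x assume x: "x \<in> (Lb \<union> (B - {b})) - J2"
    have xb: "x \<noteq> b" using x bLb by blast
    have xD: "x \<notin> D" using x xb unfolding J2_def by blast
    show "\<not> indep (insert x J2)"
    proof (cases "x \<in> Lb \<union> (P - {b})")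
      case True
      then have "\<not> indep (insert x G)" using G(4) xD D(1) by blast
      moreover have "insert x G \<subseteq> insert x J2" using D(1) bG unfolding J2_def by blast
      ultimately show ?thesis using indep_mono by blast
    next
      case False
      then have xB: "x \<in> B" "x \<notin> Lb" "x \<notin> P" using x by auto
      have xE: "x \<in> E" using xB BE by blast
          have "\<not> lt x b" using xB(2) xE unfolding Lb_def by blast
      then have bx: "lt b x" using lt_total[OF xE, of b] BE bB xb by blast
      have iBx: "indep (B - {x})" using iB by (auto intro: indep_mono)
      have "card B > 0" using fB xB card_gt_0_iff by blast
      then have "card (B - {x}) < card D" using cD xB fB by simp
      then obtain d where d: "d \<in> D - (B - {x})" "indep (insert d (B - {x}))"
        using aug[OF iBx D(3)] by blast
      have dB: "d \<notin> B" using d xD by auto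
      then have dL: "d \<in> Lb" using d D(2) by blast
      then have "lt d x" using lt_trans bx unfolding Lb_def by blast
      moreover have "basis indep (insert d (B - {x}))" using exch_basis[OF B xB(1) dB d(2)] .
      moreover have "d \<in> E" using dL unfolding Lb_def by blast
      ultimately have "x \<in> P" unfolding P_def int_passive_def using xB(1) dB by blast
      then show ?thesis using xB by blast
    qed
  qed
  have eX: "insert e (B - {b}) \<subseteq> Lb \<union> (B - {b})" using e unfolding Lb_def by blast
  have "card (insert e (B - {b})) \<le> card J2"
    using span[OF iJ2 J2X spanJ2 eX basis_indep[OF e(3)]] .
  moreover have "card (insert e (B - {b})) = card B" using e bB fB
    by (simp add: card_Diff_singleton) (metis Suc_pred card_gt_0_iff empty_iff)
  moreover have "card J2 = card B - 1" using cD D(1) fD unfolding J2_def by simp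
  moreover have "card B > 0" using fB bB card_gt_0_iff by blast
  ultimately show False by simp
qed

lemma ip_mono: "basis indep B \<Longrightarrow> basis indep C \<Longrightarrow> IP B \<subseteq> C \<Longrightarrow> IP B \<subseteq> IP C"
  using ip_mono1 by blast

end


context shctx
begin

lemma step:
  assumes ideal: "int_order_ideal E indep R (set Bs)"
    and bases: "\<forall>B\<in>set Bs'. basis indep B"
    and dist: "distinct Bs'"
    and disj: "set Bs \<inter> set Bs' = {}"
    and all: "\<forall>B. basis indep B \<longrightarrow> B \<in> set Bs \<union> set Bs'"
    and srt: "sorted (map (\<lambda>B. card (IP B)) Bs')"
    and k: "k < length Bs'"
  shows "pure_card (gen_complex (set Bs \<union> set (take k Bs')) \<inter> gen_complex {Bs' ! k}) (card (Bs' ! k) - 1)"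
  unfolding pure_card_def
proof (intro ballI impI)
  define B where "B = Bs' ! k"
  define K where "K = gen_complex (set Bs \<union> set (take k Bs')) \<inter> gen_complex {B}"
  have Bin: "B \<in> set Bs'" unfolding B_def using k by simp
  have bB: "basis indep B" using Bin bases by blast
  have fB: "finite B" using bB basis_indep indep_fin by blast
  have fIP: "finite (IP X)" if "basis indep X" for X
  proof -
    have "finite X" using that basis_indep indep_fin by blast
    then show ?thesis using IP_sub[of X] finite_subset by blast
  qed
  have ordr: "card (IP (Bs' ! i)) \<le> card (IP (Bs' ! j))" if "i \<le> j" "j < length Bs'" for i j
    using sorted_nth_mono[OF srt, of i j] that by simp
  fix S assume S: "S \<in> gen_complex (set Bs \<union> set (take k Bs')) \<inter> gen_complex {Bs' ! k}"
    and mx: "\<forall>T\<in>gen_complex (set Bs \<union> set (take k Bs')) \<inter> gen_complex {Bs' ! k}. S \<subseteq> T \<longrightarrow> T = S"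
  obtain C where C: "C \<in> set Bs \<union> set (take k Bs')" "S \<subseteq> C" "S \<subseteq> B"
    using S unfolding gen_complex_def B_def by auto
  have bC: "basis indep C"
  proof (cases "C \<in> set Bs")
    case True then show ?thesis using ideal unfolding int_order_ideal_def by blast
  next
    case False then have "C \<in> set Bs'" using C(1) in_set_takeD by fastforce
    then show ?thesis using bases by blast
  qed
  have nsub: "\<not> IP B \<subseteq> C"
  proof
    assume "IP B \<subseteq> C"
    then have sub: "IP B \<subseteq> IP C" using ip_mono bB bC by blast
    show False
    proof (cases "C \<in> set Bs")
      case True
      have "\<forall>B'. basis indep B' \<longrightarrow> IP B' \<subseteq> IP C \<longrightarrow> B' \<in> set Bs"
        using ideal True unfolding int_order_ideal_def by blast
      then have "B \<in> set Bs" using bB sub by blast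
      then show False using Bin disj by blast
    next
      case False
      then have "C \<in> set (take k Bs')" using C(1) by blast
      then obtain i where i0: "i < length (take k Bs')" "C = take k Bs' ! i"
        by (auto simp: in_set_conv_nth)
      then have i: "i < k" "C = Bs' ! i" using k by auto
      have "card (IP C) \<le> card (IP B)" using ordr[of i k] i k unfolding B_def by simp
      moreover have "card (IP B) \<le> card (IP C)" using card_mono[OF fIP[OF bC] sub] .
      ultimately have "card (IP B) = card (IP C)" by (rule antisym[rotated])
      then have "IP B = IP C" using card_subset_eq[OF fIP[OF bC] sub] by blast
      then have "B = C" using ip_inj bB bC by blast
      moreover have "Bs' ! i \<noteq> Bs' ! k" using nth_eq_iff_index_eq[OF dist, of i k] i k by simp
      ultimately show False using i(2) unfolding B_def by simp
    qed
  qed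
  then obtain b where b: "b \<in> IP B" "b \<notin> C" by blast
  have bBB: "b \<in> B" using b IP_sub by blast
  obtain B' where B': "basis indep B'" "B - {b} \<subseteq> B'" "IP B' \<subseteq> B" "b \<notin> B'"
    using ip_exch[OF bB b(1)] by blast
  have "IP B' \<subseteq> IP B" using ip_mono B'(1,3) bB by blast
  moreover have "b \<notin> IP B'" using B'(4) IP_sub by blast
  ultimately have "IP B' \<subset> IP B" using b by blast
  then have lt: "card (IP B') < card (IP B)" using fIP[OF bB] psubset_card_mono by blast
  have "B' \<in> set Bs \<union> set (take k Bs')"
  proof (cases "B' \<in> set Bs")
    case False
    then have "B' \<in> set Bs'" using all B'(1) by blast
    then obtain i where i: "i < length Bs'" "B' = Bs' ! i" by (auto simp: in_set_conv_nth)
    have "i < k"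
    proof (rule ccontr)
      assume "\<not> i < k"
      then have "card (IP B) \<le> card (IP B')" using ordr[of k i] i unfolding B_def by simp
      then show False using lt by simp
    qed
    then have "take k Bs' ! i = B'" "i < length (take k Bs')" using i k by auto
    then have "B' \<in> set (take k Bs')" by (metis nth_mem)
    then show ?thesis by blast
  qed simp
  then have "B - {b} \<in> gen_complex (set Bs \<union> set (take k Bs')) \<inter> gen_complex {Bs' ! k}"
    using B'(2) unfolding gen_complex_def B_def by blast
  moreover have "S \<subseteq> B - {b}" using C b by blast
  ultimately have "B - {b} = S" using mx by (simp only: Ball_def)
  then show "card S = card (Bs' ! k) - 1" using fB bBB unfolding B_def by auto
qed

end


theorem corollary5p3:
  fixes E :: "'a set" and indep :: "'a set \<Rightarrow> bool" and Bs :: "'a set list"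
  assumes "matroid E indep"
    and "Bs \<noteq> []"
    and "partial_shelling indep Bs"
    and "\<exists>R. linear_order_on E R \<and> int_order_ideal E indep R (set Bs)"
  shows "\<exists>Bs'. set Bs' = {B. basis indep B} - set Bs \<and> distinct Bs' \<and>
               shelling_order indep (Bs @ Bs')"
proof -
  obtain R where lin: "linear_order_on E R" and ideal: "int_order_ideal E indep R (set Bs)"
    using assms(4) by blast
  interpret shctx E indep R using assms(1) lin by unfold_locales
  define T where "T = {B. basis indep B} - set Bs"
  have "T \<subseteq> Pow E" unfolding T_def using basis_indep indep_sub by blast
  then have "finite T" using finE by (meson finite_Pow_iff finite_subset)
  then obtain xs where xs: "set xs = T" "distinct xs" using finite_distinct_list by blast
  define f where "f = (\<lambda>B. card (IP B))"
  define Bs' where "Bs' = sort_key f xs"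
  have s1: "set Bs' = T" "distinct Bs'" using xs unfolding Bs'_def by auto
  have srt: "sorted (map (\<lambda>B. card (IP B)) Bs')" unfolding Bs'_def using sorted_sort_key[of f xs]
    unfolding f_def .
  have ps: "partial_shelling indep Bs" by fact
  have bases: "\<forall>B\<in>set Bs'. basis indep B" using s1 unfolding T_def by blast
  have disj: "set Bs \<inter> set Bs' = {}" using s1 unfolding T_def by blast
  have all: "\<forall>B. basis indep B \<longrightarrow> B \<in> set Bs \<union> set Bs'" using s1 unfolding T_def by blast
  have "partial_shelling indep (Bs @ Bs')"
    unfolding partial_shelling_def
  proof (intro conjI allI impI)
    show "distinct (Bs @ Bs')" using ps s1 disj unfolding partial_shelling_def by simp
    show "\<forall>B\<in>set (Bs @ Bs'). basis indep B" using ps bases unfolding partial_shelling_def by auto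
    fix j assume j: "0 < j \<and> j < length (Bs @ Bs')"
    show "pure_card (gen_complex (set (take j (Bs @ Bs'))) \<inter> gen_complex {(Bs @ Bs') ! j})
          (card ((Bs @ Bs') ! j) - 1)"
    proof (cases "j < length Bs")
      case True
      then have "take j (Bs @ Bs') = take j Bs" "(Bs @ Bs') ! j = Bs ! j" by (auto simp: nth_append)
      then show ?thesis using ps j True unfolding partial_shelling_def by auto
    next
      case False
      define k where "k = j - length Bs"
      have k: "k < length Bs'" using j False unfolding k_def by auto
      have "take j (Bs @ Bs') = Bs @ take k Bs'" "(Bs @ Bs') ! j = Bs' ! k"
        using False unfolding k_def by (auto simp: nth_append)
      then show ?thesis using step[OF ideal bases s1(2) disj all srt k] by simp
    qed
  qed
  moreover have "set (Bs @ Bs') = {B. basis indep B}"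
    using s1 ps unfolding T_def partial_shelling_def by auto
  ultimately show ?thesis using s1 unfolding T_def shelling_order_def by blast
qed


end
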